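(* Let $(T_0,\widetilde T_0)$ be a joint pair of closed abstract Friedrichs operators on a complex Hilbert space $\mathcal{H}$, with $T_1:=\widetilde T_0^*$, $\widetilde T_1:=T_0^*$, $\mathcal{W}_0:=\operatorname{dom}T_0=\operatorname{dom}\widetilde T_0$ and $\mathcal{W}:=\operatorname{dom}T_1=\operatorname{dom}\widetilde T_1$. Let $T_{\mathrm r}=T_1|_{\mathcal{V}}$, where $\mathcal{W}_0\subseteq\mathcal{V}\subseteq\mathcal{W}$, be a closed realisation of $T_0$ which is a bijection from $\mathcal{V}$ onto $\mathcal{H}$. Then $$\mathcal{W}=\mathcal{W}_0\dotplus T_{\mathrm r}^{-1}(\operatorname{ker}\widetilde T_1)\dotplus\operatorname{ker}T_1=\mathcal{W}_0\dotplus (T_{\mathrm r}^* )^{-1}(\operatorname{ker}T_1)\dotplus\operatorname{ker}\widetilde T_1 .$$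
   Context: $\mathcal{H}$ is a complex Hilbert space with inner product $\langle\cdot,\cdot\rangle$ and norm $\|\cdot\|$. A pair $(T,\widetilde T)$ of densely defined linear operators on $\mathcal{H}$ is a joint pair of abstract Friedrichs operators if: (T1) $T$ and $\widetilde T$ have a common dense domain $\mathcal{D}$ and $\langle T\varphi,\psi\rangle=\langle\varphi,\widetilde T\psi\rangle$ for all $\varphi,\psi\in\mathcal{D}$; (T2) there is $c>0$ with $\|(T+\widetilde T)\varphi\|\le c\|\varphi\|$ for all $\varphi\in\mathcal{D}$; (T3) there is $\mu_0>0$ with $\langle (T+\widetilde T)\varphi,\varphi\rangle\ge 2\mu_0\|\varphi\|^2$ for all $\varphi\in\mathcal{D}$. A joint pair of closed abstract Friedrichs operators is such a pair $(T_0,\widetilde T_0)$ in which both operators are closed. One has $T_0\subseteq T_1$, $\widetilde T_0\subseteq\widetilde T_1$ and $\operatorname{dom}T_1=\operatorname{dom}\widetilde T_1$. A realisation of $T_0$ is a restriction $T_1|_{\mathcal{V}}$ with $\mathcal{W}_0\subseteq\mathcal{V}\subseteq\mathcal{W}$. For a closed bijective realisation $T_{\mathrm r}$, its inverse is bounded on $\mathcal{H}$, and its adjoint $T_{\mathrm r}^*$ is a realisation of $\widetilde T_0$ (i.e. $\widetilde T_0\subseteq T_{\mathrm r}^*\subseteq\widetilde T_1$) which is also bijective onto $\mathcal{H}$. *)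

theory Defs
  imports "HOL-Analysis.Analysis"
begin

text \<open>A complex Hilbert space is modelled on a type 'a with its additive group
structure, a complex scalar multiplication sm and an inner product ip
(linear in the first argument, conjugate-linear in the second).\<close>

definition complex_hilbert_space ::
  "(complex \<Rightarrow> 'a::ab_group_add \<Rightarrow> 'a) \<Rightarrow> ('a \<Rightarrow> 'a \<Rightarrow> complex) \<Rightarrow> bool" where
  "complex_hilbert_space sm ip \<longleftrightarrow>
     (\<forall>a x y. sm a (x + y) = sm a x + sm a y) \<and>
     (\<forall>a b x. sm (a + b) x = sm a x + sm b x) \<and>
     (\<forall>a b x. sm (a * b) x = sm a (sm b x)) \<and>
     (\<forall>x. sm 1 x = x) \<and>
     (\<forall>x y z. ip (x + y) z = ip x z + ip y z) \<and>
     (\<forall>a x y. ip (sm a x) y = a * ip x y) \<and>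
     (\<forall>x y. ip y x = cnj (ip x y)) \<and>
     (\<forall>x. Re (ip x x) \<ge> 0) \<and>
     (\<forall>x. ip x x = 0 \<longrightarrow> x = 0) \<and>
     (\<forall>f::nat \<Rightarrow> 'a. (\<forall>e>0. \<exists>N. \<forall>m\<ge>N. \<forall>n\<ge>N. sqrt (Re (ip (f m - f n) (f m - f n))) < e)
        \<longrightarrow> (\<exists>l. (\<lambda>n. sqrt (Re (ip (f n - l) (f n - l)))) \<longlonglongrightarrow> 0))"

definition hnorm :: "('a::ab_group_add \<Rightarrow> 'a \<Rightarrow> complex) \<Rightarrow> 'a \<Rightarrow> real" where
  "hnorm ip x = sqrt (Re (ip x x))"

definition hconv :: "('a::ab_group_add \<Rightarrow> 'a \<Rightarrow> complex) \<Rightarrow> (nat \<Rightarrow> 'a) \<Rightarrow> 'a \<Rightarrow> bool" where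
  "hconv ip f l \<longleftrightarrow> (\<lambda>n. hnorm ip (f n - l)) \<longlonglongrightarrow> 0"

definition hdense :: "('a::ab_group_add \<Rightarrow> 'a \<Rightarrow> complex) \<Rightarrow> 'a set \<Rightarrow> bool" where
  "hdense ip D \<longleftrightarrow> (\<forall>x. \<exists>f. (\<forall>n. f n \<in> D) \<and> hconv ip f x)"

definition lin_subspace :: "(complex \<Rightarrow> 'a::ab_group_add \<Rightarrow> 'a) \<Rightarrow> 'a set \<Rightarrow> bool" where
  "lin_subspace sm D \<longleftrightarrow> 0 \<in> D \<and> (\<forall>x\<in>D. \<forall>y\<in>D. x + y \<in> D) \<and> (\<forall>a. \<forall>x\<in>D. sm a x \<in> D)"

definition lin_op :: "(complex \<Rightarrow> 'a::ab_group_add \<Rightarrow> 'a) \<Rightarrow> 'a set \<Rightarrow> ('a \<Rightarrow> 'a) \<Rightarrow> bool" where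
  "lin_op sm D T \<longleftrightarrow> lin_subspace sm D \<and>
     (\<forall>x\<in>D. \<forall>y\<in>D. T (x + y) = T x + T y) \<and> (\<forall>a. \<forall>x\<in>D. T (sm a x) = sm a (T x))"

definition closed_op :: "('a::ab_group_add \<Rightarrow> 'a \<Rightarrow> complex) \<Rightarrow> 'a set \<Rightarrow> ('a \<Rightarrow> 'a) \<Rightarrow> bool" where
  "closed_op ip D T \<longleftrightarrow> (\<forall>f x y. (\<forall>n. f n \<in> D) \<and> hconv ip f x \<and> hconv ip (\<lambda>n. T (f n)) y
      \<longrightarrow> x \<in> D \<and> T x = y)"

definition adj_dom :: "('a::ab_group_add \<Rightarrow> 'a \<Rightarrow> complex) \<Rightarrow> 'a set \<Rightarrow> ('a \<Rightarrow> 'a) \<Rightarrow> 'a set" where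
  "adj_dom ip D T = {y. \<exists>z. \<forall>x\<in>D. ip (T x) y = ip x z}"

definition adj_fun :: "('a::ab_group_add \<Rightarrow> 'a \<Rightarrow> complex) \<Rightarrow> 'a set \<Rightarrow> ('a \<Rightarrow> 'a) \<Rightarrow> 'a \<Rightarrow> 'a" where
  "adj_fun ip D T y = (THE z. \<forall>x\<in>D. ip (T x) y = ip x z)"

text \<open>Joint pair of abstract Friedrichs operators (T1)--(T3), on common domain D.\<close>
definition friedrichs_pair ::
  "(complex \<Rightarrow> 'a::ab_group_add \<Rightarrow> 'a) \<Rightarrow> ('a \<Rightarrow> 'a \<Rightarrow> complex) \<Rightarrow> 'a set \<Rightarrow> ('a \<Rightarrow> 'a) \<Rightarrow> ('a \<Rightarrow> 'a) \<Rightarrow> bool" where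
  "friedrichs_pair sm ip D T T' \<longleftrightarrow>
     lin_op sm D T \<and> lin_op sm D T' \<and> hdense ip D \<and>
     (\<forall>\<phi>\<in>D. \<forall>\<psi>\<in>D. ip (T \<phi>) \<psi> = ip \<phi> (T' \<psi>)) \<and>
     (\<exists>c>0. \<forall>\<phi>\<in>D. hnorm ip (T \<phi> + T' \<phi>) \<le> c * hnorm ip \<phi>) \<and>
     (\<exists>\<mu>\<^sub>0>0. \<forall>\<phi>\<in>D. Re (ip (T \<phi> + T' \<phi>) \<phi>) \<ge> 2 * \<mu>\<^sub>0 * (hnorm ip \<phi>)\<^sup>2)"

definition closed_friedrichs_pair ::
  "(complex \<Rightarrow> 'a::ab_group_add \<Rightarrow> 'a) \<Rightarrow> ('a \<Rightarrow> 'a \<Rightarrow> complex) \<Rightarrow> 'a set \<Rightarrow> ('a \<Rightarrow> 'a) \<Rightarrow> ('a \<Rightarrow> 'a) \<Rightarrow> bool" where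
  "closed_friedrichs_pair sm ip D T T' \<longleftrightarrow>
     friedrichs_pair sm ip D T T' \<and> closed_op ip D T \<and> closed_op ip D T'"

definition direct_sum3 :: "'a::ab_group_add set \<Rightarrow> 'a set \<Rightarrow> 'a set \<Rightarrow> 'a set \<Rightarrow> bool" where
  "direct_sum3 S A B C \<longleftrightarrow>
     S = {a + b + c | a b c. a \<in> A \<and> b \<in> B \<and> c \<in> C} \<and>
     (\<forall>a\<in>A. \<forall>b\<in>B. \<forall>c\<in>C. a + b + c = 0 \<longrightarrow> a = 0 \<and> b = 0 \<and> c = 0)"

end

theory Submission
  imports Defs
begin

locale hs =
  fixes sm :: "complex \<Rightarrow> 'a::ab_group_add \<Rightarrow> 'a" and ip :: "'a \<Rightarrow> 'a \<Rightarrow> complex"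
  assumes H: "complex_hilbert_space sm ip"
begin

abbreviation N where "N \<equiv> hnorm ip"

lemmas HH = H[unfolded complex_hilbert_space_def]

lemma sm_add_right: "sm a (x + y) = sm a x + sm a y"
  using HH[THEN conjunct1] by blast
lemma sm_add_left: "sm (a + b) x = sm a x + sm b x"
  using HH[THEN conjunct2, THEN conjunct1] by blast
lemma sm_mult: "sm (a * b) x = sm a (sm b x)"
  using HH[THEN conjunct2, THEN conjunct2, THEN conjunct1] by blast
lemma sm_one[simp]: "sm 1 x = x"
  using HH[THEN conjunct2, THEN conjunct2, THEN conjunct2, THEN conjunct1] by blast
lemma ip_add_left: "ip (x + y) z = ip x z + ip y z"
  using HH[THEN conjunct2, THEN conjunct2, THEN conjunct2, THEN conjunct2, THEN conjunct1] by blast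
lemma ip_sm_left: "ip (sm a x) y = a * ip x y"
  using HH[THEN conjunct2, THEN conjunct2, THEN conjunct2, THEN conjunct2, THEN conjunct2, THEN conjunct1] by blast
lemma ip_cnj: "ip y x = cnj (ip x y)"
  using HH[THEN conjunct2, THEN conjunct2, THEN conjunct2, THEN conjunct2, THEN conjunct2, THEN conjunct2, THEN conjunct1] by blast
lemma ip_pos: "Re (ip x x) \<ge> 0"
  using HH[THEN conjunct2, THEN conjunct2, THEN conjunct2, THEN conjunct2, THEN conjunct2, THEN conjunct2, THEN conjunct2, THEN conjunct1] by blast
lemma ip_zeroD: "ip x x = 0 \<Longrightarrow> x = 0"
  using HH[THEN conjunct2, THEN conjunct2, THEN conjunct2, THEN conjunct2, THEN conjunct2, THEN conjunct2, THEN conjunct2, THEN conjunct2, THEN conjunct1] by blast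
lemma complete_raw: "(\<forall>e>0. \<exists>M. \<forall>m\<ge>M. \<forall>n\<ge>M. sqrt (Re (ip (f m - f n) (f m - f n))) < e)
        \<Longrightarrow> (\<exists>l. (\<lambda>n. sqrt (Re (ip (f n - l) (f n - l)))) \<longlonglongrightarrow> 0)"
  using HH[THEN conjunct2, THEN conjunct2, THEN conjunct2, THEN conjunct2, THEN conjunct2, THEN conjunct2, THEN conjunct2, THEN conjunct2, THEN conjunct2] by blast

lemma sm_zero_left[simp]: "sm 0 x = 0"
  using sm_add_left[of 0 0 x] by simp
lemma sm_zero_right[simp]: "sm a 0 = 0"
  using sm_add_right[of a 0 0] by simp
lemma sm_neg_right: "sm a (- x) = - sm a x"
  using sm_add_right[of a x "-x"] by (simp add: eq_neg_iff_add_eq_0 add.commute)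
lemma sm_neg_left: "sm (- a) x = - sm a x"
  using sm_add_left[of a "-a" x] by (simp add: eq_neg_iff_add_eq_0 add.commute)
lemma sm_diff_right: "sm a (x - y) = sm a x - sm a y"
  using sm_add_right[of a x "-y"] sm_neg_right by simp
lemma sm_diff_left: "sm (a - b) x = sm a x - sm b x"
  using sm_add_left[of a "-b" x] sm_neg_left by simp
lemma sm_minus_one: "sm (-1) x = - x"
  using sm_neg_left[of 1 x] by simp
lemma sm_two: "sm 2 x = x + x"
  using sm_add_left[of 1 1 x] by simp

lemma ip_zero_left[simp]: "ip 0 y = 0"
  using ip_add_left[of 0 0 y] by simp
lemma ip_neg_left: "ip (- x) y = - ip x y"
  using ip_add_left[of x "-x" y] by (simp add: eq_neg_iff_add_eq_0 add.commute)
lemma ip_diff_left: "ip (x - y) z = ip x z - ip y z"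
  using ip_add_left[of x "-y" z] ip_neg_left by simp
lemma ip_add_right: "ip x (y + z) = ip x y + ip x z"
proof -
  have "ip x (y+z) = cnj (ip (y+z) x)" by (rule ip_cnj)
  also have "... = cnj (ip y x) + cnj (ip z x)" by (simp add: ip_add_left)
  also have "... = ip x y + ip x z"
    by (simp add: ip_cnj[where y=x and x=y, symmetric] ip_cnj[where y=x and x=z, symmetric])
  finally show ?thesis .
qed
lemma ip_sm_right: "ip x (sm a y) = cnj a * ip x y"
proof -
  have "ip x (sm a y) = cnj (ip (sm a y) x)" by (rule ip_cnj)
  also have "... = cnj a * cnj (ip y x)" by (simp add: ip_sm_left)
  also have "... = cnj a * ip x y"
    by (simp add: ip_cnj[where y=x and x=y, symmetric])
  finally show ?thesis .
qed
lemma ip_zero_right[simp]: "ip x 0 = 0"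
  using ip_add_right[of x 0 0] by simp
lemma ip_neg_right: "ip x (- y) = - ip x y"
  using ip_add_right[of x y "-y"] by (simp add: eq_neg_iff_add_eq_0 add.commute)
lemma ip_diff_right: "ip x (y - z) = ip x y - ip x z"
  using ip_add_right[of x y "-z"] ip_neg_right by simp

lemma ip_self_real: "ip x x = complex_of_real (Re (ip x x))"
proof -
  have h: "ip x x = cnj (ip x x)" by (rule ip_cnj)
  have "Im (ip x x) = 0" using arg_cong[OF h, of Im] by simp
  then show ?thesis by (simp add: complex_eq_iff)
qed

lemma N_def': "N x = sqrt (Re (ip x x))" by (simp add: hnorm_def)
lemma N_nonneg[simp]: "N x \<ge> 0" by (simp add: hnorm_def ip_pos)
lemma N_sq: "(N x)\<^sup>2 = Re (ip x x)" by (simp add: hnorm_def ip_pos)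
lemma N_zero[simp]: "N 0 = 0" by (simp add: hnorm_def)
lemma N_zero_iff: "N x = 0 \<longleftrightarrow> x = 0"
proof
  assume "N x = 0"
  then have "Re (ip x x) = 0" using N_sq[of x] by simp
  then have "ip x x = 0" using ip_self_real[of x] by simp
  then show "x = 0" by (rule ip_zeroD)
qed simp
lemma ip_self_N: "ip x x = complex_of_real ((N x)\<^sup>2)"
  using ip_self_real N_sq by simp

lemma N_sq_add: "(N (x + y))\<^sup>2 = (N x)\<^sup>2 + (N y)\<^sup>2 + 2 * Re (ip x y)"
proof -
  have "ip (x+y) (x+y) = ip x x + ip y y + (ip x y + cnj (ip x y))"
    by (simp add: ip_add_left ip_add_right ip_cnj[of x y])
  then have "Re (ip (x+y) (x+y)) = Re (ip x x) + Re (ip y y) + 2 * Re (ip x y)" by simp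
  then show ?thesis by (simp add: N_sq)
qed

lemma N_sq_diff: "(N (x - y))\<^sup>2 = (N x)\<^sup>2 + (N y)\<^sup>2 - 2 * Re (ip x y)"
proof -
  have "ip (x-y) (x-y) = ip x x + ip y y - (ip x y + cnj (ip x y))"
    by (simp add: ip_diff_left ip_diff_right ip_cnj[of x y])
  then have "Re (ip (x-y) (x-y)) = Re (ip x x) + Re (ip y y) - 2 * Re (ip x y)" by simp
  then show ?thesis by (simp add: N_sq)
qed

lemma N_sm: "N (sm a x) = cmod a * N x"
proof -
  have "ip (sm a x) (sm a x) = (a * cnj a) * ip x x" by (simp add: ip_sm_left ip_sm_right)
  also have "a * cnj a = complex_of_real ((cmod a)\<^sup>2)" by (rule complex_norm_square[symmetric])
  finally have "Re (ip (sm a x) (sm a x)) = (cmod a)\<^sup>2 * Re (ip x x)"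
    by (metis Re_complex_of_real ip_self_real of_real_mult)
  then show ?thesis by (simp add: hnorm_def real_sqrt_mult)
qed

lemma N_neg: "N (- x) = N x"
  using N_sm[of "-1" x] sm_minus_one by simp

lemma N_commute: "N (x - y) = N (y - x)"
  by (metis N_neg minus_diff_eq)

lemma cauchy_schwarz: "cmod (ip x y) \<le> N x * N y"
proof (cases "y = 0")
  case True then show ?thesis by simp
next
  case False
  then have ny: "N y > 0" using N_zero_iff N_nonneg by (metis less_eq_real_def)
  define c where "c = ip x y / complex_of_real ((N y)\<^sup>2)"
  have "0 \<le> (N (x - sm c y))\<^sup>2" by simp
  also have "... = (N x)\<^sup>2 + (cmod c)\<^sup>2 * (N y)\<^sup>2 - 2 * Re (ip x (sm c y))"
    by (simp add: N_sq_diff N_sm power_mult_distrib)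
  also have "ip x (sm c y) = cnj c * ip x y" by (simp add: ip_sm_right)
  also have "cnj c * ip x y = complex_of_real ((cmod (ip x y))\<^sup>2 / (N y)\<^sup>2)"
  proof -
    have "cnj c * ip x y = (ip x y * cnj (ip x y)) / complex_of_real ((N y)\<^sup>2)"
      by (simp add: c_def mult.commute)
    also have "ip x y * cnj (ip x y) = complex_of_real ((cmod (ip x y))\<^sup>2)"
      by (rule complex_norm_square[symmetric])
    finally show ?thesis by simp
  qed
  also have "(cmod c)\<^sup>2 = (cmod (ip x y))\<^sup>2 / ((N y)\<^sup>2)\<^sup>2"
  proof -
    have "cmod (complex_of_real ((N y)\<^sup>2)) = (N y)\<^sup>2" by (simp add: norm_power)
    then show ?thesis by (simp add: c_def norm_divide power_divide)
  qed
  finally have "0 \<le> (N x)\<^sup>2 + (cmod (ip x y))\<^sup>2 / ((N y)\<^sup>2)\<^sup>2 * (N y)\<^sup>2 - 2 * ((cmod (ip x y))\<^sup>2 / (N y)\<^sup>2)"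
    by simp
  then have "0 \<le> (N x)\<^sup>2 - (cmod (ip x y))\<^sup>2 / (N y)\<^sup>2"
    using ny by (simp add: power2_eq_square field_simps)
  then have "(cmod (ip x y))\<^sup>2 \<le> (N x)\<^sup>2 * (N y)\<^sup>2"
    using ny by (simp add: field_simps)
  then have "(cmod (ip x y))\<^sup>2 \<le> (N x * N y)\<^sup>2" by (simp add: power_mult_distrib)
  then show ?thesis
    by (meson N_nonneg mult_nonneg_nonneg power2_le_imp_le)
qed

lemma N_triangle: "N (x + y) \<le> N x + N y"
proof -
  have "Re (ip x y) \<le> N x * N y"
    using cauchy_schwarz[of x y] complex_Re_le_cmod order_trans by blast
  then have "(N (x + y))\<^sup>2 \<le> (N x + N y)\<^sup>2"
    by (simp add: N_sq_add power2_sum)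
  then show ?thesis
    by (meson N_nonneg add_nonneg_nonneg power2_le_imp_le)
qed

lemma N_triangle_diff: "N (x - z) \<le> N (x - y) + N (y - z)"
  using N_triangle[of "x - y" "y - z"] by simp

lemma N_diff_triangle: "N (x - y) \<le> N x + N y"
  using N_triangle[of x "-y"] N_neg by simp

lemma N_rev_triangle: "\<bar>N x - N y\<bar> \<le> N (x - y)"
proof -
  have 1: "N x \<le> N (x - y) + N y" using N_triangle[of "x - y" y] by simp
  have 2: "N y \<le> N (y - x) + N x" using N_triangle[of "y - x" x] by simp
  show ?thesis using 1 2 N_commute[of x y] by (simp add: abs_le_iff)
qed

lemma parallelogram: "(N (x + y))\<^sup>2 + (N (x - y))\<^sup>2 = 2 * (N x)\<^sup>2 + 2 * (N y)\<^sup>2"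
  by (simp add: N_sq_add N_sq_diff)

end

context hs
begin

lemma hconv_iff: "hconv ip f l \<longleftrightarrow> (\<lambda>n. N (f n - l)) \<longlonglongrightarrow> 0"
  by (simp add: hconv_def)

lemma hconv_le:
  assumes "\<And>n. N (f n - l) \<le> a n" "a \<longlonglongrightarrow> 0"
  shows "hconv ip f l"
  unfolding hconv_def
  by (rule Lim_null_comparison[OF _ assms(2)]) (use assms(1) in simp)

lemma hconv_const: "hconv ip (\<lambda>n. x) x"
  by (simp add: hconv_def)

lemma hconv_add:
  assumes "hconv ip f x" "hconv ip g y"
  shows "hconv ip (\<lambda>n. f n + g n) (x + y)"
proof (rule hconv_le)
  show "N (f n + g n - (x + y)) \<le> N (f n - x) + N (g n - y)" for n
    using N_triangle[of "f n - x" "g n - y"] by (simp add: algebra_simps)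
  show "(\<lambda>n. N (f n - x) + N (g n - y)) \<longlonglongrightarrow> 0"
    using assms tendsto_add[of _ 0 _ _ 0] unfolding hconv_def by force
qed

lemma hconv_neg:
  assumes "hconv ip f x"
  shows "hconv ip (\<lambda>n. - f n) (- x)"
proof -
  have "N (- f n - - x) = N (f n - x)" for n
    using N_neg[of "f n - x"] by (simp add: algebra_simps)
  then show ?thesis using assms unfolding hconv_def by simp
qed

lemma hconv_diff:
  assumes "hconv ip f x" "hconv ip g y"
  shows "hconv ip (\<lambda>n. f n - g n) (x - y)"
  using hconv_add[OF assms(1) hconv_neg[OF assms(2)]] by simp

lemma hconv_sm:
  assumes "hconv ip f x"
  shows "hconv ip (\<lambda>n. sm a (f n)) (sm a x)"
proof (rule hconv_le)
  show "N (sm a (f n) - sm a x) \<le> cmod a * N (f n - x)" for n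
    by (simp add: sm_diff_right[symmetric] N_sm)
  show "(\<lambda>n. cmod a * N (f n - x)) \<longlonglongrightarrow> 0"
    using assms tendsto_mult_right_zero unfolding hconv_def by blast
qed

lemma hconv_unique:
  assumes "hconv ip f x" "hconv ip f y"
  shows "x = y"
proof -
  have a: "(\<lambda>n. N (f n - x) + N (f n - y)) \<longlonglongrightarrow> 0"
    using assms tendsto_add[of _ 0 _ _ 0] unfolding hconv_def by force
  have "\<forall>n. N (x - y) \<le> N (f n - x) + N (f n - y)"
    using N_triangle_diff N_commute by (metis add.commute)
  then have "N (x - y) \<le> 0"
    using LIMSEQ_le_const[OF a] by blast
  then have "N (x - y) = 0" using N_nonneg by (meson order_antisym)
  then show ?thesis using N_zero_iff by simp
qed

lemma hconv_N:
  assumes "hconv ip f x"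
  shows "(\<lambda>n. N (f n)) \<longlonglongrightarrow> N x"
proof -
  have "(\<lambda>n. N (f n) - N x) \<longlonglongrightarrow> 0"
    by (rule Lim_null_comparison[of _ "\<lambda>n. N (f n - x)"])
       (use assms N_rev_triangle in \<open>auto simp: hconv_def\<close>)
  then show ?thesis by (simp add: LIM_zero_cancel)
qed

lemma hconv_ip_left:
  assumes "hconv ip f x"
  shows "(\<lambda>n. ip (f n) y) \<longlonglongrightarrow> ip x y"
proof -
  have "(\<lambda>n. ip (f n) y - ip x y) \<longlonglongrightarrow> 0"
  proof (rule Lim_null_comparison[of _ "\<lambda>n. N (f n - x) * N y"])
    show "\<forall>\<^sub>F n in sequentially. norm (ip (f n) y - ip x y) \<le> N (f n - x) * N y"
      using cauchy_schwarz by (simp add: ip_diff_left[symmetric])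
    show "(\<lambda>n. N (f n - x) * N y) \<longlonglongrightarrow> 0"
      using assms tendsto_mult_left_zero unfolding hconv_def by blast
  qed
  then show ?thesis by (simp add: LIM_zero_cancel)
qed

lemma hconv_ip_right:
  assumes "hconv ip f x"
  shows "(\<lambda>n. ip y (f n)) \<longlonglongrightarrow> ip y x"
proof -
  have "(\<lambda>n. ip y (f n) - ip y x) \<longlonglongrightarrow> 0"
  proof (rule Lim_null_comparison[of _ "\<lambda>n. N y * N (f n - x)"])
    show "\<forall>\<^sub>F n in sequentially. norm (ip y (f n) - ip y x) \<le> N y * N (f n - x)"
      using cauchy_schwarz by (simp add: ip_diff_right[symmetric])
    show "(\<lambda>n. N y * N (f n - x)) \<longlonglongrightarrow> 0"
      using assms tendsto_mult_right_zero unfolding hconv_def by blast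
  qed
  then show ?thesis by (simp add: LIM_zero_cancel)
qed

lemma complete:
  assumes "\<And>e. e > 0 \<Longrightarrow> \<exists>M. \<forall>m\<ge>M. \<forall>n\<ge>M. N (f m - f n) < e"
  shows "\<exists>l. hconv ip f l"
  using complete_raw[of f] assms unfolding hconv_def hnorm_def by blast

lemma dense_unique:
  assumes "hdense ip D" "\<forall>x\<in>D. ip x z1 = ip x z2"
  shows "z1 = z2"
proof -
  obtain f where f: "\<forall>n. f n \<in> D" "hconv ip f (z1 - z2)"
    using assms(1) unfolding hdense_def by blast
  have "\<forall>n. ip (f n) (z1 - z2) = 0" using f(1) assms(2) by (simp add: ip_diff_right)
  then have "(\<lambda>n. 0) \<longlonglongrightarrow> ip (z1 - z2) (z1 - z2)"
    using hconv_ip_left[OF f(2), of "z1 - z2"] by simp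
  then have "ip (z1 - z2) (z1 - z2) = 0" using LIMSEQ_unique tendsto_const by blast
  then have "z1 - z2 = 0" by (rule ip_zeroD)
  then show ?thesis by simp
qed

lemma adj_fun_eq:
  assumes "hdense ip D" "\<forall>x\<in>D. ip (T x) y = ip x z"
  shows "adj_fun ip D T y = z"
  unfolding adj_fun_def
proof (rule the_equality)
  show "\<forall>x\<in>D. ip (T x) y = ip x z" by fact
  fix z' assume "\<forall>x\<in>D. ip (T x) y = ip x z'"
  then show "z' = z" using assms dense_unique[of D z' z] by simp
qed

lemma adj_domI: "\<forall>x\<in>D. ip (T x) y = ip x z \<Longrightarrow> y \<in> adj_dom ip D T"
  unfolding adj_dom_def by blast

lemma adj_prop:
  assumes "hdense ip D" "y \<in> adj_dom ip D T"
  shows "\<forall>x\<in>D. ip (T x) y = ip x (adj_fun ip D T y)"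
proof -
  obtain z where z: "\<forall>x\<in>D. ip (T x) y = ip x z" using assms(2) unfolding adj_dom_def by blast
  then show ?thesis using adj_fun_eq[OF assms(1) z] by simp
qed

lemma adj_add:
  assumes "hdense ip D" "y1 \<in> adj_dom ip D T" "y2 \<in> adj_dom ip D T"
  shows "y1 + y2 \<in> adj_dom ip D T \<and> adj_fun ip D T (y1 + y2) = adj_fun ip D T y1 + adj_fun ip D T y2"
proof -
  have "\<forall>x\<in>D. ip (T x) (y1 + y2) = ip x (adj_fun ip D T y1 + adj_fun ip D T y2)"
    using adj_prop[OF assms(1,2)] adj_prop[OF assms(1,3)] by (simp add: ip_add_right)
  then show ?thesis using adj_fun_eq[OF assms(1)] adj_domI by blast
qed

lemma adj_sm:
  assumes "hdense ip D" "y \<in> adj_dom ip D T"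
  shows "sm a y \<in> adj_dom ip D T \<and> adj_fun ip D T (sm a y) = sm a (adj_fun ip D T y)"
proof -
  have "\<forall>x\<in>D. ip (T x) (sm a y) = ip x (sm a (adj_fun ip D T y))"
    using adj_prop[OF assms(1,2)] by (simp add: ip_sm_right)
  then show ?thesis using adj_fun_eq[OF assms(1)] adj_domI by blast
qed

lemma adj_neg:
  assumes "hdense ip D" "y \<in> adj_dom ip D T"
  shows "- y \<in> adj_dom ip D T \<and> adj_fun ip D T (- y) = - adj_fun ip D T y"
  using adj_sm[OF assms, of "-1"] by (simp add: sm_minus_one)

lemma adj_diff:
  assumes "hdense ip D" "y1 \<in> adj_dom ip D T" "y2 \<in> adj_dom ip D T"
  shows "y1 - y2 \<in> adj_dom ip D T \<and> adj_fun ip D T (y1 - y2) = adj_fun ip D T y1 - adj_fun ip D T y2"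
  using adj_add[OF assms(1,2) adj_neg[OF assms(1,3), THEN conjunct1]] adj_neg[OF assms(1,3)]
  by simp

lemma adj_zero:
  assumes "hdense ip D"
  shows "0 \<in> adj_dom ip D T \<and> adj_fun ip D T 0 = 0"
  using adj_fun_eq[OF assms, of T 0 0] adj_domI[of D T 0 0] by simp

lemma subspace_neg: "lin_subspace sm M \<Longrightarrow> x \<in> M \<Longrightarrow> - x \<in> M"
  unfolding lin_subspace_def by (metis sm_minus_one)

lemma subspace_diff: "lin_subspace sm M \<Longrightarrow> x \<in> M \<Longrightarrow> y \<in> M \<Longrightarrow> x - y \<in> M"
  using subspace_neg unfolding lin_subspace_def by (metis diff_conv_add_uminus)

lemma subspace_add: "lin_subspace sm M \<Longrightarrow> x \<in> M \<Longrightarrow> y \<in> M \<Longrightarrow> x + y \<in> M"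
  unfolding lin_subspace_def by blast

lemma subspace_sm: "lin_subspace sm M \<Longrightarrow> x \<in> M \<Longrightarrow> sm a x \<in> M"
  unfolding lin_subspace_def by blast

lemma subspace_zero: "lin_subspace sm M \<Longrightarrow> 0 \<in> M"
  unfolding lin_subspace_def by blast

lemma adj_subspace:
  assumes "hdense ip D"
  shows "lin_subspace sm (adj_dom ip D T)"
  unfolding lin_subspace_def using adj_add[OF assms] adj_sm[OF assms] adj_zero[OF assms] by blast

end

context hs
begin

definition closed_set :: "'a set \<Rightarrow> bool" where
  "closed_set M \<longleftrightarrow> (\<forall>f x. (\<forall>n. f n \<in> M) \<and> hconv ip f x \<longrightarrow> x \<in> M)"

lemma sm_half_twice: "sm 2 (x - sm (1/2) y) = x + x - y"
proof -
  have "sm 2 (sm (1/2) y) = y" by (simp add: sm_mult[symmetric])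
  then show ?thesis by (simp add: sm_diff_right sm_two)
qed

lemma projection:
  assumes M: "lin_subspace sm M" and cl: "closed_set M"
  shows "\<exists>m\<in>M. \<forall>y\<in>M. ip y (x - m) = 0"
proof -
  define S where "S = (\<lambda>m. N (x - m)) ` M"
  define d where "d = Inf S"
  have Sne: "S \<noteq> {}" using subspace_zero[OF M] S_def by blast
  have Sbdd: "bdd_below S" unfolding S_def by (rule bdd_belowI[of _ 0]) auto
  have dle: "d \<le> N (x - m)" if "m \<in> M" for m
    unfolding d_def S_def by (rule cInf_lower) (use that Sbdd S_def in auto)
  have d0: "d \<ge> 0" unfolding d_def by (rule cInf_greatest[OF Sne]) (auto simp: S_def)
  have "\<forall>n. \<exists>m\<in>M. N (x - m) < d + 1 / (real n + 1)"
  proof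
    fix n
    have "Inf S < d + 1 / (real n + 1)" unfolding d_def by (simp add: add_pos_pos)
    then obtain s where "s \<in> S" "s < d + 1 / (real n + 1)" using cInf_lessD[OF Sne] by blast
    then show "\<exists>m\<in>M. N (x - m) < d + 1 / (real n + 1)" unfolding S_def by blast
  qed
  then obtain ms where ms: "\<And>n. ms n \<in> M" "\<And>n. N (x - ms n) < d + 1 / (real n + 1)"
    by metis
  define e where "e = (\<lambda>n::nat. 1 / (real n + 1))"
  have e_pos: "e n > 0" for n by (simp add: e_def)
  have e_le1: "e n \<le> 1" for n by (simp add: e_def)
  have e_mono: "n \<le> k \<Longrightarrow> e k \<le> e n" for n k by (simp add: e_def frac_le)
  have key: "(N (ms k - ms n))\<^sup>2 \<le> 4 * (2 * d + 1) * e K" if "K \<le> n" "K \<le> k" for n k K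
  proof -
    have p: "(N ((x - ms n) + (x - ms k)))\<^sup>2 + (N ((x - ms n) - (x - ms k)))\<^sup>2
          = 2 * (N (x - ms n))\<^sup>2 + 2 * (N (x - ms k))\<^sup>2" by (rule parallelogram)
    define mid where "mid = sm (1/2) (ms n + ms k)"
    have midM: "mid \<in> M" unfolding mid_def using ms(1) M subspace_add subspace_sm by blast
    have "(x - ms n) + (x - ms k) = sm 2 (x - mid)"
      unfolding mid_def sm_half_twice by (simp add: algebra_simps)
    then have "N ((x - ms n) + (x - ms k)) = 2 * N (x - mid)" by (simp add: N_sm)
    moreover have "2 * d \<le> 2 * N (x - mid)" using dle[OF midM] by simp
    ultimately have "2 * d \<le> N ((x - ms n) + (x - ms k))" by simp
    then have "(2 * d)\<^sup>2 \<le> (N ((x - ms n) + (x - ms k)))\<^sup>2"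
      by (rule power_mono) (use d0 in simp)
    then have A: "4 * d\<^sup>2 \<le> (N ((x - ms n) + (x - ms k)))\<^sup>2"
      by (simp add: power_mult_distrib)
    have B: "(N (x - ms n))\<^sup>2 \<le> (d + e K)\<^sup>2"
    proof -
      have "N (x - ms n) \<le> d + e K" using ms(2)[of n] e_mono[OF that(1)] unfolding e_def by simp
      then show ?thesis by (rule power_mono) simp
    qed
    have C: "(N (x - ms k))\<^sup>2 \<le> (d + e K)\<^sup>2"
    proof -
      have "N (x - ms k) \<le> d + e K" using ms(2)[of k] e_mono[OF that(2)] unfolding e_def by simp
      then show ?thesis by (rule power_mono) simp
    qed
    have "(x - ms n) - (x - ms k) = ms k - ms n" by simp
    then have "(N (ms k - ms n))\<^sup>2 \<le> 4 * (d + e K)\<^sup>2 - 4 * d\<^sup>2" using p A B C by simp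
    also have "... = 4 * (2 * d + e K) * e K" by (simp add: power2_eq_square algebra_simps)
    also have "... \<le> 4 * (2 * d + 1) * e K" using e_le1[of K] e_pos[of K] by simp
    finally show ?thesis .
  qed
  have cauchy: "\<exists>K. \<forall>k\<ge>K. \<forall>n\<ge>K. N (ms k - ms n) < r" if r: "r > 0" for r
  proof -
    obtain K :: nat where K: "4 * (2 * d + 1) / r\<^sup>2 < real K" using reals_Archimedean2 by blast
    have "4 * (2 * d + 1) * e K < r\<^sup>2"
    proof -
      have r2: "0 < r\<^sup>2" using r by simp
      have k1: "4 * (2 * d + 1) < real K * r\<^sup>2" using K r2 by (simp add: field_simps)
      have eq: "r\<^sup>2 * (real K + 1) = real K * r\<^sup>2 + r\<^sup>2" by (simp add: algebra_simps)
      have "4 * (2 * d + 1) < r\<^sup>2 * (real K + 1)"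
        unfolding eq using k1 r2 by linarith
      then show ?thesis unfolding e_def using r by (simp add: field_simps)
    qed
    then have "\<forall>k\<ge>K. \<forall>n\<ge>K. (N (ms k - ms n))\<^sup>2 < r\<^sup>2"
      using key le_less_trans by blast
    then show ?thesis using r by (meson N_nonneg power_less_imp_less_base less_imp_le)
  qed
  obtain m where m: "hconv ip ms m" using complete[OF cauchy] by blast
  have mM: "m \<in> M" using cl ms(1) m unfolding closed_set_def by blast
  have Nle: "N (x - m) \<le> d"
  proof -
    have "e = (\<lambda>n. inverse (real (Suc n)))" unfolding e_def by (simp add: inverse_eq_divide add.commute)
    then have e0: "e \<longlonglongrightarrow> 0" using LIMSEQ_inverse_real_of_nat by simp
    have a: "(\<lambda>n. d + e n + N (ms n - m)) \<longlonglongrightarrow> d + 0 + 0"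
      using m e0 unfolding hconv_def
      by (intro tendsto_add tendsto_const) simp_all
    have "\<forall>n. N (x - m) \<le> d + e n + N (ms n - m)"
      using ms(2) N_triangle_diff[of x m "ms n" for n] unfolding e_def
      by (smt (verit) N_triangle_diff)
    then show ?thesis using LIMSEQ_le_const[OF a] by simp
  qed
  have "ip y (x - m) = 0" if yM: "y \<in> M" for y
  proof (rule ccontr)
    assume nz: "ip y (x - m) \<noteq> 0"
    define w where "w = x - m"
    define \<alpha> where "\<alpha> = ip y w"
    have a0: "cmod \<alpha> > 0" using nz by (simp add: \<alpha>_def w_def)
    define t :: real where "t = 1 / ((N y)\<^sup>2 + 1)"
    have pp: "(N y)\<^sup>2 + 1 > 0" using zero_le_power2[of "N y"] by linarith
    have t0: "t > 0" unfolding t_def using pp by simp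
    have tN: "t * (N y)\<^sup>2 < 1" unfolding t_def using pp by (simp add: field_simps)
    define s where "s = complex_of_real t * cnj \<alpha>"
    have "m + sm s y \<in> M" using M mM yM subspace_add subspace_sm by blast
    then have "d \<le> N (x - (m + sm s y))" by (rule dle)
    then have "N w \<le> N (w - sm s y)" using Nle unfolding w_def by (simp add: algebra_simps)
    then have "(N w)\<^sup>2 \<le> (N (w - sm s y))\<^sup>2" by (simp add: power_mono)
    also have "... = (N w)\<^sup>2 + (cmod s)\<^sup>2 * (N y)\<^sup>2 - 2 * Re (ip w (sm s y))"
      by (simp add: N_sq_diff N_sm power_mult_distrib)
    also have "ip w (sm s y) = complex_of_real (t * (cmod \<alpha>)\<^sup>2)"
    proof -
      have "ip w (sm s y) = cnj s * ip w y" by (simp add: ip_sm_right)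
      also have "ip w y = cnj \<alpha>" unfolding \<alpha>_def by (rule ip_cnj)
      also have "cnj s * cnj \<alpha> = complex_of_real t * (\<alpha> * cnj \<alpha>)" by (simp add: s_def)
      also have "\<alpha> * cnj \<alpha> = complex_of_real ((cmod \<alpha>)\<^sup>2)" by (rule complex_norm_square[symmetric])
      finally show ?thesis by simp
    qed
    also have "cmod s = t * cmod \<alpha>" using t0 by (simp add: s_def norm_mult)
    finally have "0 \<le> t\<^sup>2 * (cmod \<alpha>)\<^sup>2 * (N y)\<^sup>2 - 2 * (t * (cmod \<alpha>)\<^sup>2)"
      by (simp add: power_mult_distrib)
    then have "0 \<le> (t * (cmod \<alpha>)\<^sup>2) * (t * (N y)\<^sup>2 - 2)"
      by (simp add: power2_eq_square algebra_simps)
    moreover have "t * (cmod \<alpha>)\<^sup>2 > 0" using t0 a0 by simp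
    ultimately have "t * (N y)\<^sup>2 - 2 \<ge> 0" by (simp add: zero_le_mult_iff)
    then show False using tN by simp
  qed
  then show ?thesis using mM by blast
qed

lemma riesz:
  fixes \<phi> :: "'a \<Rightarrow> complex"
  assumes add: "\<And>x y. \<phi> (x + y) = \<phi> x + \<phi> y"
    and smul: "\<And>a x. \<phi> (sm a x) = a * \<phi> x"
    and bd: "\<And>x. cmod (\<phi> x) \<le> C * N x"
  shows "\<exists>b. \<forall>x. \<phi> x = ip x b"
proof (cases "\<forall>x. \<phi> x = 0")
  case True
  then show ?thesis by (intro exI[of _ 0]) simp
next
  case False
  then obtain e where e: "\<phi> e \<noteq> 0" by blast
  have phi0: "\<phi> 0 = 0" using add[of 0 0] by simp
  have phidiff: "\<phi> (x - y) = \<phi> x - \<phi> y" for x y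
    using add[of "x - y" y] by simp
  define K where "K = {x. \<phi> x = 0}"
  have KS: "lin_subspace sm K"
    unfolding lin_subspace_def K_def using phi0 add smul by simp
  have Kc: "closed_set K"
    unfolding closed_set_def
  proof (intro allI impI)
    fix f x assume a: "(\<forall>n. f n \<in> K) \<and> hconv ip f x"
    have "\<forall>n. cmod (\<phi> x) \<le> C * N (f n - x)"
    proof
      fix n
      have "\<phi> (x - f n) = \<phi> x" using a phidiff unfolding K_def by simp
      then show "cmod (\<phi> x) \<le> C * N (f n - x)" using bd[of "x - f n"] N_commute[of x "f n"] by simp
    qed
    moreover have "(\<lambda>n. C * N (f n - x)) \<longlonglongrightarrow> 0"
      using a tendsto_mult_right_zero unfolding hconv_def by blast
    ultimately have "cmod (\<phi> x) \<le> 0" using LIMSEQ_le_const by blast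
    then show "x \<in> K" unfolding K_def by simp
  qed
  obtain m where m: "m \<in> K" "\<forall>y\<in>K. ip y (e - m) = 0" using projection[OF KS Kc] by blast
  define z where "z = e - m"
  have phiz: "\<phi> z = \<phi> e" using m(1) phidiff unfolding z_def K_def by simp
  have z0: "z \<noteq> 0" using phiz e phi0 by auto
  have ipz: "ip z z \<noteq> 0" using z0 ip_zeroD by blast
  define b where "b = sm (cnj (\<phi> z / ip z z)) z"
  have "\<phi> x = ip x b" for x
  proof -
    define u where "u = x - sm (\<phi> x / \<phi> z) z"
    have "\<phi> u = 0" unfolding u_def using phiz e by (simp add: phidiff smul)
    then have "ip u z = 0" using m(2) unfolding K_def z_def by simp
    then have "ip x z = (\<phi> x / \<phi> z) * ip z z" unfolding u_def by (simp add: ip_diff_left ip_sm_left)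
    then show ?thesis unfolding b_def using ipz phiz e by (simp add: ip_sm_right field_simps)
  qed
  then show ?thesis by blast
qed

end

context hs
begin

lemma baire:
  fixes E :: "nat \<Rightarrow> 'a set"
  assumes cover: "\<And>x. \<exists>n. x \<in> E n"
  shows "\<exists>n x r. r > 0 \<and> (\<forall>p. N (p - x) < r \<longrightarrow> (\<forall>\<epsilon>>0. \<exists>y\<in>E n. N (p - y) < \<epsilon>))"
proof (rule ccontr)
  assume "\<not> ?thesis"
  then have nb: "\<forall>n x r. r > 0 \<longrightarrow> (\<exists>p. N (p - x) < r \<and> (\<exists>\<epsilon>>0. \<forall>y\<in>E n. \<epsilon> \<le> N (p - y)))"
    by (meson not_le)
  have stp: "\<exists>x' r'. r' > 0 \<and> r' \<le> r / 2 \<and> N (x' - x) + r' \<le> r \<and> (\<forall>z. N (z - x') \<le> r' \<longrightarrow> z \<notin> E n)"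
    if r: "r > 0" for n x r
  proof -
    obtain p \<epsilon> where p: "N (p - x) < r" "\<epsilon> > 0" "\<forall>y\<in>E n. \<epsilon> \<le> N (p - y)"
      using nb r by blast
    define r' where "r' = min (\<epsilon> / 2) ((r - N (p - x)) / 2)"
    have r'1: "r' \<le> (r - N (p - x)) / 2" unfolding r'_def by (rule min.cobounded2)
    have r'2: "r' \<le> \<epsilon> / 2" unfolding r'_def by (rule min.cobounded1)
    have "r' > 0" using p unfolding r'_def by simp
    moreover have "r' \<le> r / 2" using r'1 N_nonneg[of "p - x"] by argo
    moreover have "N (p - x) + r' \<le> r" using r'1 p(1) by argo
    moreover have "z \<notin> E n" if "N (z - p) \<le> r'" for z
    proof
      assume "z \<in> E n"
      then have "\<epsilon> \<le> N (p - z)" using p by blast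
      moreover have "N (p - z) < \<epsilon>" using that p(2) N_commute[of p z] r'2 by argo
      ultimately show False by simp
    qed
    ultimately show ?thesis by blast
  qed
  have ch: "\<forall>t. \<exists>q. snd (snd t) > 0 \<longrightarrow> (snd q > 0 \<and> snd q \<le> snd (snd t) / 2
        \<and> N (fst q - fst (snd t)) + snd q \<le> snd (snd t) \<and> (\<forall>z. N (z - fst q) \<le> snd q \<longrightarrow> z \<notin> E (fst t)))"
  proof
    fix t :: "nat \<times> 'a \<times> real"
    show "\<exists>q. snd (snd t) > 0 \<longrightarrow> (snd q > 0 \<and> snd q \<le> snd (snd t) / 2
        \<and> N (fst q - fst (snd t)) + snd q \<le> snd (snd t) \<and> (\<forall>z. N (z - fst q) \<le> snd q \<longrightarrow> z \<notin> E (fst t)))"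
    proof (cases "snd (snd t) > 0")
      case True
      from stp[where n="fst t" and x="fst (snd t)", OF True] obtain x' r' where
        "r' > 0 \<and> r' \<le> snd (snd t) / 2 \<and> N (x' - fst (snd t)) + r' \<le> snd (snd t)
          \<and> (\<forall>z. N (z - x') \<le> r' \<longrightarrow> z \<notin> E (fst t))" by blast
      then show ?thesis by (intro exI[of _ "(x', r')"]) simp
    qed simp
  qed
  obtain F where F: "\<forall>t. snd (snd t) > 0 \<longrightarrow> (snd (F t) > 0 \<and> snd (F t) \<le> snd (snd t) / 2
        \<and> N (fst (F t) - fst (snd t)) + snd (F t) \<le> snd (snd t) \<and> (\<forall>z. N (z - fst (F t)) \<le> snd (F t) \<longrightarrow> z \<notin> E (fst t)))"
    using choice[OF ch] by blast
  define X where "X = (\<lambda>n x r. fst (F (n, x, r)))"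
  define R where "R = (\<lambda>n x r. snd (F (n, x, r)))"
  have XR: "\<And>n x r. r > 0 \<Longrightarrow> R n x r > 0 \<and> R n x r \<le> r / 2 \<and> N (X n x r - x) + R n x r \<le> r
      \<and> (\<forall>z. N (z - X n x r) \<le> R n x r \<longrightarrow> z \<notin> E n)"
    unfolding X_def R_def using F by fastforce
  define P where "P = rec_nat (0::'a, 1::real) (\<lambda>k p. (X k (fst p) (snd p), R k (fst p) (snd p)))"
  define xs where "xs = (\<lambda>k. fst (P k))"
  define rs where "rs = (\<lambda>k. snd (P k))"
  have P0: "xs 0 = 0" "rs 0 = 1" by (simp_all add: xs_def rs_def P_def)
  have PS: "xs (Suc k) = X k (xs k) (rs k)" "rs (Suc k) = R k (xs k) (rs k)" for k
    by (simp_all add: xs_def rs_def P_def)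
  have rpos: "rs k > 0" for k
    by (induct k) (simp_all add: P0 PS XR)
  have rle: "rs k \<le> (1/2) ^ k" for k
  proof (induct k)
    case 0 then show ?case by (simp add: P0)
  next
    case (Suc k)
    have "rs (Suc k) \<le> rs k / 2" using XR[OF rpos[of k]] PS by simp
    then show ?case using Suc by simp
  qed
  have nest: "\<forall>z. N (z - xs m) \<le> rs m \<longrightarrow> N (z - xs k) \<le> rs k" if "k \<le> m" for k m
    using that
  proof (induct m rule: dec_induct)
    case base then show ?case by simp
  next
    case (step m)
    show ?case
    proof (intro allI impI)
      fix z assume z: "N (z - xs (Suc m)) \<le> rs (Suc m)"
      have "N (z - xs m) \<le> N (z - xs (Suc m)) + N (xs (Suc m) - xs m)" by (rule N_triangle_diff)
      also have "... \<le> rs m"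
      proof -
        have "N (xs (Suc m) - xs m) + rs (Suc m) \<le> rs m" using XR[OF rpos[of m]] by (simp add: PS)
        then show ?thesis using z by linarith
      qed
      finally show "N (z - xs k) \<le> rs k" using step(3) by blast
    qed
  qed
  have inball: "N (xs m - xs k) \<le> rs k" if "k \<le> m" for k m
    using nest[OF that] rpos[of m] by (simp add: less_imp_le)
  have cauchy: "\<exists>K. \<forall>m\<ge>K. \<forall>n\<ge>K. N (xs m - xs n) < e" if e: "e > 0" for e
  proof -
    obtain K where K: "(1/2::real) ^ K < e / 2" using real_arch_pow_inv[of "e/2" "1/2::real"] e by auto
    have "N (xs m - xs n) < e" if "m \<ge> K" "n \<ge> K" for m n
    proof -
      have "N (xs m - xs n) \<le> N (xs m - xs K) + N (xs K - xs n)" by (rule N_triangle_diff)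
      also have "... \<le> rs K + rs K" using inball[OF that(1)] inball[OF that(2)] N_commute[of "xs K" "xs n"] by simp
      also have "... < e" using rle[of K] K by simp
      finally show ?thesis .
    qed
    then show ?thesis by blast
  qed
  obtain l where l: "hconv ip xs l" using complete[OF cauchy] by blast
  have lin: "N (l - xs k) \<le> rs k" for k
  proof -
    have a: "(\<lambda>m. N (xs m - l) + rs k) \<longlonglongrightarrow> 0 + rs k"
      using l unfolding hconv_def by (intro tendsto_add tendsto_const) simp
    have "\<forall>m\<ge>k. N (l - xs k) \<le> N (xs m - l) + rs k"
    proof (intro allI impI)
      fix m assume "k \<le> m"
      have "N (l - xs k) \<le> N (l - xs m) + N (xs m - xs k)" by (rule N_triangle_diff)
      then show "N (l - xs k) \<le> N (xs m - l) + rs k" using inball[OF \<open>k \<le> m\<close>] N_commute[of l "xs m"] by simp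
    qed
    then show ?thesis using LIMSEQ_le_const[OF a] by auto
  qed
  obtain n where "l \<in> E n" using cover by blast
  moreover have "l \<notin> E n" using XR[OF rpos[of n]] lin[of "Suc n"] PS by simp
  ultimately show False by simp
qed

end

context hs
begin

lemma bounded_inverse:
  assumes V: "lin_subspace sm V"
    and add: "\<forall>x\<in>V. \<forall>y\<in>V. T (x + y) = T x + T y"
    and smul: "\<forall>a. \<forall>x\<in>V. T (sm a x) = sm a (T x)"
    and cl: "closed_op ip V T"
    and bij: "bij_betw T V UNIV"
  shows "\<exists>C. \<forall>f. N (inv_into V T f) \<le> C * N f"
proof -
  define A where "A = inv_into V T"
  have surj: "T ` V = UNIV" using bij by (simp add: bij_betw_def)
  have inj: "inj_on T V" using bij by (simp add: bij_betw_def)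
  have AV: "A f \<in> V" for f unfolding A_def using surj by (simp add: inv_into_into)
  have TA: "T (A f) = f" for f unfolding A_def using surj by (simp add: f_inv_into_f)
  have Auniq: "v \<in> V \<Longrightarrow> T v = f \<Longrightarrow> A f = v" for v f
    unfolding A_def using inj by (simp add: inv_into_f_eq)
  have A_add: "A (f + g) = A f + A g" for f g
    using Auniq[of "A f + A g" "f + g"] AV TA add V subspace_add by metis
  have A_sm: "A (sm a f) = sm a (A f)" for a f
    using Auniq[of "sm a (A f)" "sm a f"] AV TA smul V subspace_sm by metis
  have A_zero: "A 0 = 0" using A_sm[of 0 0] by simp
  have A_neg: "A (- f) = - A f" for f using A_sm[of "-1" f] by (simp add: sm_minus_one)
  have A_diff: "A (f - g) = A f - A g" for f g
    using A_add[of f "-g"] A_neg[of g] by simp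
  define E where "E = (\<lambda>n::nat. {f. N (A f) \<le> real n})"
  have cover: "\<exists>n. f \<in> E n" for f unfolding E_def using real_arch_simple by auto
  obtain n x0 r where r: "r > 0" and ball: "\<forall>p. N (p - x0) < r \<longrightarrow> (\<forall>\<epsilon>>0. \<exists>y\<in>E n. N (p - y) < \<epsilon>)"
    using baire[OF cover] by blast
  have approx: "\<exists>h. N (A h) \<le> 2 * real n \<and> N (g - h) < \<epsilon>" if g: "N g < r" and e: "\<epsilon> > 0" for g \<epsilon>
  proof -
    have e2: "\<epsilon> / 2 > 0" using e by simp
    obtain y1 where y1: "y1 \<in> E n" "N (x0 + g - y1) < \<epsilon> / 2"
      using ball[rule_format, of "x0 + g", OF _ e2] g by auto
    obtain y2 where y2: "y2 \<in> E n" "N (x0 - y2) < \<epsilon> / 2"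
      using ball[rule_format, of "x0", OF _ e2] r by auto
    have "N (A (y1 - y2)) \<le> N (A y1) + N (A y2)" unfolding A_diff by (rule N_diff_triangle)
    also have "... \<le> 2 * real n" using y1(1) y2(1) unfolding E_def by simp
    finally have 1: "N (A (y1 - y2)) \<le> 2 * real n" .
    have eq: "g - (y1 - y2) = (x0 + g - y1) - (x0 - y2)" by (simp add: algebra_simps)
    have "N (g - (y1 - y2)) \<le> N (x0 + g - y1) + N (x0 - y2)" unfolding eq by (rule N_diff_triangle)
    also have "... < \<epsilon>" using y1(2) y2(2) by argo
    finally show ?thesis using 1 by blast
  qed
  define M where "M = 4 * real n / r"
  have M0: "M \<ge> 0" unfolding M_def using r by simp
  have half: "\<exists>h. N (A h) \<le> M * N f \<and> N (f - h) \<le> N f / 2" for f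
  proof (cases "f = 0")
    case True
    then show ?thesis by (intro exI[of _ 0]) (simp add: A_zero)
  next
    case False
    then have nf: "N f > 0" using N_zero_iff N_nonneg by (metis less_eq_real_def)
    define c where "c = r / (2 * N f)"
    have c0: "c > 0" unfolding c_def using r nf by simp
    define g where "g = sm (complex_of_real c) f"
    have "N g = c * N f" unfolding g_def using c0 by (simp add: N_sm norm_divide)
    also have "c * N f = r / 2" unfolding c_def using nf by simp
    finally have Ng: "N g = r / 2" .
    obtain h' where h': "N (A h') \<le> 2 * real n" "N (g - h') < r / 4"
      using approx[of g "r/4"] Ng r by auto
    define h where "h = sm (complex_of_real (1/c)) h'"
    have fg: "sm (complex_of_real (1/c)) g = f"
      unfolding g_def using c0 by (simp add: sm_mult[symmetric])
    have "N (A h) = (1/c) * N (A h')" unfolding h_def A_sm using c0 by (simp add: N_sm norm_divide)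
    also have "... \<le> (1/c) * (2 * real n)" using h'(1) c0 by (simp add: divide_right_mono)
    also have "... = M * N f" unfolding M_def c_def using r nf by (simp add: field_simps)
    finally have 1: "N (A h) \<le> M * N f" .
    have "f - h = sm (complex_of_real (1/c)) (g - h')" unfolding h_def using fg by (simp add: sm_diff_right)
    then have "N (f - h) = (1/c) * N (g - h')" using c0 by (simp add: N_sm norm_divide)
    also have "... \<le> (1/c) * (r / 4)"
      by (rule mult_left_mono) (use h'(2) c0 in simp_all)
    also have "... = N f / 2" unfolding c_def using r nf by (simp add: field_simps)
    finally show ?thesis using 1 by blast
  qed
  have "\<forall>f. \<exists>h. N (A h) \<le> M * N f \<and> N (f - h) \<le> N f / 2" using half by blast
  then obtain H where H: "\<And>f. N (A (H f)) \<le> M * N f \<and> N (f - H f) \<le> N f / 2"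
    by metis
  have "N (A f) \<le> (2 * M) * N f" for f
  proof -
    define F where "F = (\<lambda>k. ((\<lambda>x. x - H x) ^^ k) f)"
    have F0: "F 0 = f" by (simp add: F_def)
    have FS: "F (Suc k) = F k - H (F k)" for k by (simp add: F_def)
    have FN: "N (F k) \<le> (1/2) ^ k * N f" for k
    proof (induct k)
      case 0 then show ?case by (simp add: F0)
    next
      case (Suc k)
      have "N (F (Suc k)) \<le> N (F k) / 2" using H[of "F k"] FS by simp
      also have "... \<le> (1/2) ^ k * N f / 2" using Suc by simp
      finally show ?case by simp
    qed
    define u where "u = (\<lambda>k. A (f - F k))"
    have uS: "u (Suc k) - u k = A (H (F k))" for k
    proof -
      have "(f - F (Suc k)) - (f - F k) = H (F k)" by (simp add: FS)
      then show ?thesis unfolding u_def A_diff[symmetric] by simp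
    qed
    have gN: "N (A (H (F k))) \<le> M * ((1/2) ^ k * N f)" for k
      using H[of "F k"] FN[of k] M0 by (meson mult_left_mono order_trans)
    have bnd: "N (u L - u K) \<le> 2 * M * N f * ((1/2) ^ K - (1/2) ^ L)" if "K \<le> L" for K L
      using that
    proof (induct L rule: dec_induct)
      case base then show ?case by simp
    next
      case (step L)
      have "u (Suc L) - u K = (u (Suc L) - u L) + (u L - u K)" by simp
      then have "N (u (Suc L) - u K) \<le> N (A (H (F L))) + N (u L - u K)"
        using N_triangle uS by metis
      also have "... \<le> M * ((1/2) ^ L * N f) + 2 * M * N f * ((1/2) ^ K - (1/2) ^ L)"
        using gN[of L] step(3) by argo
      also have "... = 2 * M * N f * ((1/2) ^ K - (1/2) ^ Suc L)" by (simp add: algebra_simps)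
      finally show ?case .
    qed
    have bnd': "N (u L - u K) \<le> 2 * M * N f * (1/2) ^ K" if "K \<le> L" for K L
    proof -
      have "2 * M * N f * ((1/2) ^ K - (1/2) ^ L) \<le> 2 * M * N f * (1/2) ^ K"
        using M0 by (simp add: mult_left_mono)
      then show ?thesis using bnd[OF that] by argo
    qed
    have u0: "u 0 = 0" unfolding u_def by (simp add: F0 A_zero)
    have uN: "N (u L) \<le> 2 * M * N f" for L
    proof -
      have "N (u L) \<le> 2 * M * N f * (1/2) ^ 0" using bnd'[of 0 L] u0 by simp
      then show ?thesis by simp
    qed
    have cauchy: "\<exists>K. \<forall>m\<ge>K. \<forall>n\<ge>K. N (u m - u n) < e" if e: "e > 0" for e
    proof -
      define B where "B = 4 * M * N f + 1"
      have B: "B > 0" unfolding B_def using M0 by (simp add: add_nonneg_pos)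
      obtain K where K: "(1/2::real) ^ K < e / B" using real_arch_pow_inv[of "e / B" "1/2::real"] e B by auto
      have "N (u m - u n) < e" if "m \<ge> K" "n \<ge> K" for m n
      proof -
        have "N (u m - u n) \<le> N (u m - u K) + N (u K - u n)" by (rule N_triangle_diff)
        also have "... \<le> 2 * M * N f * (1/2) ^ K + 2 * M * N f * (1/2) ^ K"
          using bnd'[OF that(1)] bnd'[OF that(2)] N_commute[of "u K" "u n"] by argo
        also have "... \<le> B * (1/2) ^ K" unfolding B_def by (simp add: algebra_simps)
        also have "... < e" using K B by (simp add: field_simps)
        finally show ?thesis .
      qed
      then show ?thesis by blast
    qed
    obtain y where y: "hconv ip u y" using complete[OF cauchy] by blast
    have Tu: "T (u k) = f - F k" for k unfolding u_def by (rule TA)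
    have hT: "hconv ip (\<lambda>k. T (u k)) f"
    proof (rule hconv_le)
      show "N (T (u k) - f) \<le> (1/2) ^ k * N f" for k using FN[of k] N_neg[of "F k"] by (simp add: Tu)
      show "(\<lambda>k. (1/2::real) ^ k * N f) \<longlonglongrightarrow> 0"
        by (rule tendsto_mult_left_zero, rule LIMSEQ_power_zero) simp
    qed
    have uV: "\<forall>k. u k \<in> V" unfolding u_def using AV by simp
    have "y \<in> V \<and> T y = f"
      by (rule cl[unfolded closed_op_def, rule_format, of u y f]) (use uV y hT in simp)
    then have Af: "A f = y" using Auniq by blast
    have "N y \<le> 2 * M * N f"
      using LIMSEQ_le_const2[OF hconv_N[OF y]] uN by blast
    then show ?thesis using Af by simp
  qed
  then show ?thesis unfolding A_def by blast
qed

end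

context hs
begin

lemma lin_op_facts:
  assumes "lin_op sm D S"
  shows "lin_subspace sm D" "\<And>x y. x \<in> D \<Longrightarrow> y \<in> D \<Longrightarrow> S (x + y) = S x + S y"
    "\<And>a x. x \<in> D \<Longrightarrow> S (sm a x) = sm a (S x)"
  using assms unfolding lin_op_def by blast+

lemma lin_op_neg:
  assumes "lin_op sm D S" "x \<in> D"
  shows "S (- x) = - S x"
  using lin_op_facts(3)[OF assms(1) assms(2), of "-1"] by (simp add: sm_minus_one)

lemma lin_op_diff:
  assumes "lin_op sm D S" "x \<in> D" "y \<in> D"
  shows "S (x - y) = S x - S y"
proof -
  have "- y \<in> D" using subspace_neg[OF lin_op_facts(1)[OF assms(1)] assms(3)] .
  then have "S (x + - y) = S x + S (- y)" by (rule lin_op_facts(2)[OF assms(1) assms(2)])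
  then show ?thesis using lin_op_neg[OF assms(1,3)] by simp
qed

lemma lin_op_zero:
  assumes "lin_op sm D S"
  shows "S 0 = 0"
  using lin_op_facts(3)[OF assms subspace_zero[OF lin_op_facts(1)[OF assms]], of 0] by simp

lemma hdense_mono: "hdense ip D \<Longrightarrow> D \<subseteq> V \<Longrightarrow> hdense ip V"
  unfolding hdense_def by blast

lemma coercive_bound:
  assumes mu: "\<mu> > 0" and co: "\<mu> * (N x)\<^sup>2 \<le> Re (ip (S x) x)"
  shows "\<mu> * N x \<le> N (S x)"
proof (cases "N x = 0")
  case True then show ?thesis by simp
next
  case False
  then have nx: "N x > 0" using N_nonneg by (metis less_eq_real_def)
  have "\<mu> * (N x)\<^sup>2 \<le> N (S x) * N x"
    using co complex_Re_le_cmod[of "ip (S x) x"] cauchy_schwarz[of "S x" x] by argo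
  then have "(\<mu> * N x) * N x \<le> N (S x) * N x" by (simp add: power2_eq_square algebra_simps)
  then show ?thesis using nx by simp
qed

lemma range_subspace:
  assumes "lin_op sm D S"
  shows "lin_subspace sm (S ` D)"
proof -
  note f = lin_op_facts[OF assms]
  show ?thesis unfolding lin_subspace_def
  proof (intro conjI ballI allI)
    show "0 \<in> S ` D" using lin_op_zero[OF assms] subspace_zero[OF f(1)] by (metis image_eqI)
    fix x y assume "x \<in> S ` D" "y \<in> S ` D"
    then obtain a b where "a \<in> D" "b \<in> D" "x = S a" "y = S b" by blast
    then show "x + y \<in> S ` D" using f(2) subspace_add[OF f(1)] by (metis image_eqI)
  next
    fix c x assume "x \<in> S ` D"
    then obtain a where "a \<in> D" "x = S a" by blast
    then show "sm c x \<in> S ` D" using f(3) subspace_sm[OF f(1)] by (metis image_eqI)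
  qed
qed

lemma conv_eventually:
  assumes "hconv ip f g" "e > 0"
  shows "\<exists>K. \<forall>n\<ge>K. N (f n - g) < e"
proof -
  have "eventually (\<lambda>n. N (f n - g) < e) sequentially"
    using assms order_tendstoD(2) unfolding hconv_def by blast
  then show ?thesis unfolding eventually_sequentially by blast
qed

lemma range_closed:
  assumes lo: "lin_op sm D S" and cl: "closed_op ip D S" and mu: "\<mu> > 0"
    and bd: "\<forall>x\<in>D. \<mu> * N x \<le> N (S x)"
  shows "closed_set (S ` D)"
  unfolding closed_set_def
proof (intro allI impI)
  fix f g assume a: "(\<forall>n. f n \<in> S ` D) \<and> hconv ip f g"
  have ch: "\<forall>n. \<exists>x. x \<in> D \<and> S x = f n" using a by (metis imageE)
  obtain xs where xs': "\<forall>n. xs n \<in> D \<and> S (xs n) = f n" using choice[OF ch] by blast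
  then have xs: "\<And>n. xs n \<in> D" "\<And>n. S (xs n) = f n" by auto
  have cauchy: "\<exists>K. \<forall>m\<ge>K. \<forall>n\<ge>K. N (xs m - xs n) < e" if e: "e > 0" for e
  proof -
    obtain K where K: "\<forall>n\<ge>K. N (f n - g) < \<mu> * e / 2"
      using conv_eventually[of f g "\<mu> * e / 2"] a e mu by auto
    have "N (xs m - xs n) < e" if "m \<ge> K" "n \<ge> K" for m n
    proof -
      have "\<mu> * N (xs m - xs n) \<le> N (S (xs m - xs n))"
        using bd subspace_diff[OF lin_op_facts(1)[OF lo] xs(1) xs(1)] by blast
      also have "S (xs m - xs n) = f m - f n" using lin_op_diff[OF lo xs(1) xs(1)] xs(2) by simp
      also have "N (f m - f n) \<le> N (f m - g) + N (g - f n)" by (rule N_triangle_diff)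
      also have "... < \<mu> * e / 2 + \<mu> * e / 2" using K that N_commute[of g "f n"] by (metis add_strict_mono)
      finally have "\<mu> * N (xs m - xs n) < \<mu> * e" by simp
      then show ?thesis using mu by simp
    qed
    then show ?thesis by blast
  qed
  obtain x where x: "hconv ip xs x" using complete[OF cauchy] by blast
  have "hconv ip (\<lambda>n. S (xs n)) g" using a xs(2) by simp
  then have "x \<in> D \<and> S x = g"
    by (intro cl[unfolded closed_op_def, rule_format, of xs x g]) (use xs(1) x in simp)
  then show "g \<in> S ` D" by (metis image_eqI)
qed

lemma range_decomp:
  assumes lo: "lin_op sm D S" and cl: "closed_op ip D S" and mu: "\<mu> > 0"
    and bd: "\<forall>x\<in>D. \<mu> * N x \<le> N (S x)" and dn: "hdense ip D"
  shows "\<exists>a\<in>D. \<exists>k. k \<in> adj_dom ip D S \<and> adj_fun ip D S k = 0 \<and> g = S a + k"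
proof -
  obtain m where m: "m \<in> S ` D" "\<forall>y\<in>S ` D. ip y (g - m) = 0"
    using projection[OF range_subspace[OF lo] range_closed[OF lo cl mu bd]] by blast
  obtain a where a: "a \<in> D" "m = S a" using m(1) by blast
  have k: "\<forall>x\<in>D. ip (S x) (g - m) = ip x 0" using m(2) by simp
  show ?thesis
    using adj_domI[OF k] adj_fun_eq[OF dn k] a by (intro bexI[of _ a] exI[of _ "g - m"]) auto
qed

lemma dom_sub:
  assumes dn: "hdense ip D" and l1: "lin_op sm D S1" and l2: "lin_op sm D S2"
    and sym: "\<forall>x\<in>D. \<forall>y\<in>D. ip (S1 x) y = ip x (S2 y)"
    and bd: "\<forall>x\<in>D. N (S1 x + S2 x) \<le> c * N x"
    and w: "w \<in> adj_dom ip D S2" and c0: "c \<ge> 0"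
  shows "w \<in> adj_dom ip D S1"
proof -
  obtain z where z: "\<forall>x\<in>D. ip (S2 x) w = ip x z" using w unfolding adj_dom_def by blast
  obtain ws where ws: "\<forall>n. ws n \<in> D" "hconv ip ws w" using dn unfolding hdense_def by blast
  define S where "S = (\<lambda>x. S1 x + S2 x)"
  have Sdiff: "S (x - y) = S x - S y" if "x \<in> D" "y \<in> D" for x y
    unfolding S_def using lin_op_diff[OF l1 that] lin_op_diff[OF l2 that] by simp
  have D: "lin_subspace sm D" using lin_op_facts(1)[OF l1] .
  have sym2: "ip (S2 x) y = ip x (S1 y)" if "x \<in> D" "y \<in> D" for x y
  proof -
    have "ip (S2 x) y = cnj (ip y (S2 x))" by (rule ip_cnj)
    also have "... = cnj (ip (S1 y) x)" using sym that by simp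
    also have "... = ip x (S1 y)" by (rule ip_cnj[symmetric])
    finally show ?thesis .
  qed
  have cauchy: "\<exists>K. \<forall>m\<ge>K. \<forall>n\<ge>K. N (S (ws m) - S (ws n)) < e" if e: "e > 0" for e
  proof -
    obtain K where K: "\<forall>n\<ge>K. N (ws n - w) < e / (2 * (c + 1))"
      using conv_eventually[of ws w "e / (2 * (c + 1))"] ws e c0 by auto
    have "N (S (ws m) - S (ws n)) < e" if "m \<ge> K" "n \<ge> K" for m n
    proof -
      have "N (S (ws m) - S (ws n)) = N (S (ws m - ws n))" using Sdiff ws by simp
      also have "... \<le> c * N (ws m - ws n)" using bd subspace_diff[OF D] ws unfolding S_def by blast
      also have "... \<le> c * (N (ws m - w) + N (w - ws n))"
        using c0 N_triangle_diff by (simp add: mult_left_mono)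
      also have "... \<le> (c + 1) * (N (ws m - w) + N (w - ws n))"
        by (simp add: distrib_right)
      also have "... < (c + 1) * (e / (2 * (c + 1)) + e / (2 * (c + 1)))"
        using K that N_commute[of w "ws n"] c0 by (intro mult_strict_left_mono add_strict_mono) auto
      also have "... = e"
      proof -
        have cp: "2 * (c + 1) \<noteq> 0" using c0 by simp
        have "(c + 1) * (e / (2 * (c + 1)) + e / (2 * (c + 1))) = (2 * (c + 1)) * (e / (2 * (c + 1)))"
          by (simp add: algebra_simps)
        also have "... = e" using cp by simp
        finally show ?thesis .
      qed
      finally show ?thesis .
    qed
    then show ?thesis by blast
  qed
  obtain z2 where z2: "hconv ip (\<lambda>n. S (ws n)) z2" using complete[OF cauchy] by blast
  have "ip (S1 x) w = ip x (z2 - z)" if x: "x \<in> D" for x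
  proof -
    have l1: "(\<lambda>n. ip (S x) (ws n)) \<longlonglongrightarrow> ip (S x) w" using hconv_ip_right[OF ws(2)] .
    have "ip (S x) (ws n) = ip x (S (ws n))" for n
      unfolding S_def using sym x ws(1) sym2[OF x ws(1)[rule_format, of n]]
      by (simp add: ip_add_left ip_add_right add.commute)
    then have l2: "(\<lambda>n. ip (S x) (ws n)) \<longlonglongrightarrow> ip x z2" using hconv_ip_right[OF z2] by simp
    have "ip (S x) w = ip x z2" using LIMSEQ_unique[OF l1 l2] .
    then have "ip (S1 x) w + ip x z = ip x z2" using z x unfolding S_def by (simp add: ip_add_left)
    then show ?thesis by (simp add: ip_diff_right eq_diff_eq)
  qed
  then show ?thesis by (rule adj_domI[rule_format])
qed

end

theorem lemma3p6:
  fixes sm :: "complex \<Rightarrow> 'a::ab_group_add \<Rightarrow> 'a"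
    and ip :: "'a \<Rightarrow> 'a \<Rightarrow> complex"
    and W\<^sub>0 V :: "'a set" and T\<^sub>0 T\<^sub>0' :: "'a \<Rightarrow> 'a"
  assumes H: "complex_hilbert_space sm ip"
    and pair: "closed_friedrichs_pair sm ip W\<^sub>0 T\<^sub>0 T\<^sub>0'"
    and W_def: "W = adj_dom ip W\<^sub>0 T\<^sub>0'"
    and T1_def: "T\<^sub>1 = adj_fun ip W\<^sub>0 T\<^sub>0'"
    and T1'_def: "T\<^sub>1' = adj_fun ip W\<^sub>0 T\<^sub>0"
    and V: "W\<^sub>0 \<subseteq> V" "V \<subseteq> W" "lin_subspace sm V"
    and closed_r: "closed_op ip V T\<^sub>1"
    and bij_r: "bij_betw T\<^sub>1 V UNIV"
  shows "direct_sum3 W W\<^sub>0 {v \<in> V. T\<^sub>1 v \<in> {w \<in> adj_dom ip W\<^sub>0 T\<^sub>0. T\<^sub>1' w = 0}} {w \<in> W. T\<^sub>1 w = 0}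
       \<and> direct_sum3 W W\<^sub>0 {u \<in> adj_dom ip V T\<^sub>1. adj_fun ip V T\<^sub>1 u \<in> {w \<in> W. T\<^sub>1 w = 0}}
                          {w \<in> adj_dom ip W\<^sub>0 T\<^sub>0. T\<^sub>1' w = 0}"
proof -
  interpret hs sm ip by (rule hs.intro[OF H])
  have fp: "friedrichs_pair sm ip W\<^sub>0 T\<^sub>0 T\<^sub>0'" and clT0: "closed_op ip W\<^sub>0 T\<^sub>0"
    and clT0': "closed_op ip W\<^sub>0 T\<^sub>0'"
    using pair unfolding closed_friedrichs_pair_def by auto
  have lo0: "lin_op sm W\<^sub>0 T\<^sub>0" and lo0': "lin_op sm W\<^sub>0 T\<^sub>0'" and dn: "hdense ip W\<^sub>0"
    and sym: "\<forall>\<phi>\<in>W\<^sub>0. \<forall>\<psi>\<in>W\<^sub>0. ip (T\<^sub>0 \<phi>) \<psi> = ip \<phi> (T\<^sub>0' \<psi>)"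
    using fp unfolding friedrichs_pair_def by auto
  obtain c where c: "c > 0" "\<forall>\<phi>\<in>W\<^sub>0. N (T\<^sub>0 \<phi> + T\<^sub>0' \<phi>) \<le> c * N \<phi>"
    using fp unfolding friedrichs_pair_def by auto
  obtain \<mu> where mu: "\<mu> > 0" "\<forall>\<phi>\<in>W\<^sub>0. Re (ip (T\<^sub>0 \<phi> + T\<^sub>0' \<phi>) \<phi>) \<ge> 2 * \<mu> * (N \<phi>)\<^sup>2"
    using fp unfolding friedrichs_pair_def by auto
  have W0s: "lin_subspace sm W\<^sub>0" using lin_op_facts(1)[OF lo0] .
  have sym': "\<forall>x\<in>W\<^sub>0. \<forall>y\<in>W\<^sub>0. ip (T\<^sub>0' x) y = ip x (T\<^sub>0 y)"
  proof (intro ballI)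
    fix x y assume xy: "x \<in> W\<^sub>0" "y \<in> W\<^sub>0"
    have "ip (T\<^sub>0' x) y = cnj (ip y (T\<^sub>0' x))" by (rule ip_cnj)
    also have "... = cnj (ip (T\<^sub>0 y) x)" using sym xy by simp
    also have "... = ip x (T\<^sub>0 y)" by (rule ip_cnj[symmetric])
    finally show "ip (T\<^sub>0' x) y = ip x (T\<^sub>0 y)" .
  qed
  have ReEq: "Re (ip (T\<^sub>0' x) x) = Re (ip (T\<^sub>0 x) x)" if "x \<in> W\<^sub>0" for x
    using sym' that ip_cnj[of x "T\<^sub>0 x"] by simp
  have co0: "\<forall>x\<in>W\<^sub>0. \<mu> * N x \<le> N (T\<^sub>0 x)"
  proof
    fix x assume x: "x \<in> W\<^sub>0"
    have "2 * \<mu> * (N x)\<^sup>2 \<le> Re (ip (T\<^sub>0 x) x) + Re (ip (T\<^sub>0' x) x)"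
      using mu(2) x by (simp add: ip_add_left)
    then have "\<mu> * (N x)\<^sup>2 \<le> Re (ip (T\<^sub>0 x) x)" using ReEq[OF x] by argo
    then show "\<mu> * N x \<le> N (T\<^sub>0 x)" by (rule coercive_bound[OF mu(1)])
  qed
  have co0': "\<forall>x\<in>W\<^sub>0. \<mu> * N x \<le> N (T\<^sub>0' x)"
  proof
    fix x assume x: "x \<in> W\<^sub>0"
    have "2 * \<mu> * (N x)\<^sup>2 \<le> Re (ip (T\<^sub>0 x) x) + Re (ip (T\<^sub>0' x) x)"
      using mu(2) x by (simp add: ip_add_left)
    then have "\<mu> * (N x)\<^sup>2 \<le> Re (ip (T\<^sub>0' x) x)" using ReEq[OF x] by argo
    then show "\<mu> * N x \<le> N (T\<^sub>0' x)" by (rule coercive_bound[OF mu(1)])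
  qed
  define W' where "W' = adj_dom ip W\<^sub>0 T\<^sub>0"
  have WW': "W = W'"
  proof
    show "W \<subseteq> W'" unfolding W_def W'_def
      using dom_sub[OF dn lo0 lo0' sym c(2)] c(1) by auto
    have c2: "\<forall>\<phi>\<in>W\<^sub>0. N (T\<^sub>0' \<phi> + T\<^sub>0 \<phi>) \<le> c * N \<phi>" using c(2) by (simp add: add.commute)
    show "W' \<subseteq> W" unfolding W_def W'_def
      using dom_sub[OF dn lo0' lo0 sym' c2] c(1) by auto
  qed
  have Ws: "lin_subspace sm W" unfolding W_def by (rule adj_subspace[OF dn])
  have T1prop: "\<forall>x\<in>W\<^sub>0. ip (T\<^sub>0' x) w = ip x (T\<^sub>1 w)" if "w \<in> W" for w
    using adj_prop[OF dn] that unfolding W_def T1_def by blast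
  have T1'prop: "\<forall>x\<in>W\<^sub>0. ip (T\<^sub>0 x) w = ip x (T\<^sub>1' w)" if "w \<in> W" for w
    using adj_prop[OF dn] that WW' unfolding W'_def T1'_def by blast
  have T1add: "T\<^sub>1 (x + y) = T\<^sub>1 x + T\<^sub>1 y" if "x \<in> W" "y \<in> W" for x y
    using adj_add[OF dn] that unfolding W_def T1_def by blast
  have T1diff: "T\<^sub>1 (x - y) = T\<^sub>1 x - T\<^sub>1 y" if "x \<in> W" "y \<in> W" for x y
    using adj_diff[OF dn] that unfolding W_def T1_def by blast
  have T1sm: "T\<^sub>1 (sm a x) = sm a (T\<^sub>1 x)" if "x \<in> W" for a x
    using adj_sm[OF dn] that unfolding W_def T1_def by blast
  have T1zero: "T\<^sub>1 0 = 0" using adj_zero[OF dn] unfolding T1_def by blast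
  have T1'add: "T\<^sub>1' (x + y) = T\<^sub>1' x + T\<^sub>1' y" if "x \<in> W" "y \<in> W" for x y
    using adj_add[OF dn] that WW' unfolding W'_def T1'_def by blast
  have T1'diff: "T\<^sub>1' (x - y) = T\<^sub>1' x - T\<^sub>1' y" if "x \<in> W" "y \<in> W" for x y
    using adj_diff[OF dn] that WW' unfolding W'_def T1'_def by blast
  have T1'zero: "T\<^sub>1' 0 = 0" using adj_zero[OF dn] unfolding T1'_def by blast
  have F1: "a \<in> W \<and> T\<^sub>1 a = T\<^sub>0 a" if a: "a \<in> W\<^sub>0" for a
  proof -
    have "\<forall>x\<in>W\<^sub>0. ip (T\<^sub>0' x) a = ip x (T\<^sub>0 a)" using sym' a by simp
    then show ?thesis unfolding W_def T1_def using adj_domI adj_fun_eq[OF dn] by blast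
  qed
  have F1': "a \<in> W \<and> T\<^sub>1' a = T\<^sub>0' a" if a: "a \<in> W\<^sub>0" for a
  proof -
    have "\<forall>x\<in>W\<^sub>0. ip (T\<^sub>0 x) a = ip x (T\<^sub>0' a)" using sym a by simp
    then show ?thesis unfolding WW' W'_def T1'_def using adj_domI adj_fun_eq[OF dn] by blast
  qed
  have VW: "\<And>v. v \<in> V \<Longrightarrow> v \<in> W" using V(2) by blast
  have Vadd: "\<forall>x\<in>V. \<forall>y\<in>V. T\<^sub>1 (x + y) = T\<^sub>1 x + T\<^sub>1 y" using T1add VW by blast
  have Vsm: "\<forall>a. \<forall>x\<in>V. T\<^sub>1 (sm a x) = sm a (T\<^sub>1 x)" using T1sm VW by blast
  obtain C where C: "\<forall>f. N (inv_into V T\<^sub>1 f) \<le> C * N f"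
    using bounded_inverse[OF V(3) Vadd Vsm closed_r bij_r] by blast
  define A where "A = inv_into V T\<^sub>1"
  have surj: "T\<^sub>1 ` V = UNIV" using bij_r by (simp add: bij_betw_def)
  have inj: "inj_on T\<^sub>1 V" using bij_r by (simp add: bij_betw_def)
  have AV: "A f \<in> V" for f unfolding A_def using surj by (simp add: inv_into_into)
  have TA: "T\<^sub>1 (A f) = f" for f unfolding A_def using surj by (simp add: f_inv_into_f)
  have Auniq: "v \<in> V \<Longrightarrow> T\<^sub>1 v = f \<Longrightarrow> A f = v" for v f
    unfolding A_def using inj by (simp add: inv_into_f_eq)
  have A_add: "A (f + g) = A f + A g" for f g
    using Auniq[of "A f + A g" "f + g"] AV TA Vadd V(3) subspace_add by metis
  have A_sm: "A (sm a f) = sm a (A f)" for a f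
    using Auniq[of "sm a (A f)" "sm a f"] AV TA Vsm V(3) subspace_sm by metis
  have dnV: "hdense ip V" using hdense_mono[OF dn V(1)] .
  define R where "R = adj_fun ip V T\<^sub>1"
  define Ds where "Ds = adj_dom ip V T\<^sub>1"
  have surjR: "\<exists>b. b \<in> Ds \<and> R b = h" for h
  proof -
    define \<phi> where "\<phi> = (\<lambda>f. ip (A f) h)"
    have "\<exists>b. \<forall>f. \<phi> f = ip f b"
    proof (rule riesz)
      show "\<phi> (x + y) = \<phi> x + \<phi> y" for x y unfolding \<phi>_def by (simp add: A_add ip_add_left)
      show "\<phi> (sm a x) = a * \<phi> x" for a x unfolding \<phi>_def by (simp add: A_sm ip_sm_left)
      show "cmod (\<phi> x) \<le> (C * N h) * N x" for x
      proof -
        have "cmod (\<phi> x) \<le> N (A x) * N h" unfolding \<phi>_def by (rule cauchy_schwarz)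
        also have "... \<le> (C * N x) * N h" using C unfolding A_def by (simp add: mult_right_mono)
        finally show ?thesis by (simp add: algebra_simps)
      qed
    qed
    then obtain b where b: "\<forall>f. ip (A f) h = ip f b" unfolding \<phi>_def by blast
    have "\<forall>v\<in>V. ip (T\<^sub>1 v) b = ip v h" using b Auniq by metis
    then show ?thesis unfolding Ds_def R_def using adj_domI adj_fun_eq[OF dnV] by blast
  qed
  have Rinj: "b = 0" if "b \<in> Ds" "R b = 0" for b
  proof -
    have "\<forall>v\<in>V. ip (T\<^sub>1 v) b = 0" using adj_prop[OF dnV] that unfolding Ds_def R_def by simp
    then have "ip (T\<^sub>1 (A b)) b = 0" using AV by blast
    then have "ip b b = 0" using TA by simp
    then show ?thesis by (rule ip_zeroD)
  qed
  have DsW: "b \<in> W \<and> T\<^sub>1' b = R b" if b: "b \<in> Ds" for b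
  proof -
    have "\<forall>x\<in>V. ip (T\<^sub>1 x) b = ip x (R b)" using adj_prop[OF dnV] b unfolding Ds_def R_def by blast
    then have "\<forall>x\<in>W\<^sub>0. ip (T\<^sub>0 x) b = ip x (R b)" using V(1) F1 by fastforce
    then show ?thesis unfolding WW' W'_def T1'_def using adj_domI adj_fun_eq[OF dn] by blast
  qed
  have Dsadd: "b1 + b2 \<in> Ds \<and> R (b1 + b2) = R b1 + R b2" if "b1 \<in> Ds" "b2 \<in> Ds" for b1 b2
    using adj_add[OF dnV] that unfolding Ds_def R_def by blast
  have orth1: "ip (T\<^sub>0 a) k = 0" if "a \<in> W\<^sub>0" "k \<in> W" "T\<^sub>1' k = 0" for a k
    using T1'prop[OF that(2)] that by simp
  have orth2: "ip (T\<^sub>0' a) k = 0" if "a \<in> W\<^sub>0" "k \<in> W" "T\<^sub>1 k = 0" for a k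
    using T1prop[OF that(2)] that by simp
  have zero_of: "a = 0" if "a \<in> W\<^sub>0" "S a = 0" "\<forall>x\<in>W\<^sub>0. \<mu> * N x \<le> N (S x)" for a S
  proof -
    have "\<mu> * N a \<le> 0" using that by force
    then have "N a = 0" using mu(1) N_nonneg[of a] by (simp add: mult_le_0_iff)
    then show ?thesis using N_zero_iff by simp
  qed
  have part1: "direct_sum3 W W\<^sub>0 {v \<in> V. T\<^sub>1 v \<in> {w \<in> adj_dom ip W\<^sub>0 T\<^sub>0. T\<^sub>1' w = 0}} {w \<in> W. T\<^sub>1 w = 0}"
    unfolding direct_sum3_def
  proof (intro conjI)
    show "W = {a + b + c |a b c. a \<in> W\<^sub>0 \<and> b \<in> {v \<in> V. T\<^sub>1 v \<in> {w \<in> adj_dom ip W\<^sub>0 T\<^sub>0. T\<^sub>1' w = 0}}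
              \<and> c \<in> {w \<in> W. T\<^sub>1 w = 0}}"
    proof (intro equalityI subsetI)
      fix u assume u: "u \<in> W"
      obtain a k where a: "a \<in> W\<^sub>0" "k \<in> adj_dom ip W\<^sub>0 T\<^sub>0" "T\<^sub>1' k = 0" "T\<^sub>1 u = T\<^sub>0 a + k"
        using range_decomp[OF lo0 clT0 mu(1) co0 dn, of "T\<^sub>1 u"] unfolding T1'_def by blast
      define b where "b = A k"
      have b: "b \<in> V" "T\<^sub>1 b = k" unfolding b_def using AV TA by auto
      define c where "c = u - a - b"
      have aW: "a \<in> W" using F1[OF a(1)] by simp
      have bW: "b \<in> W" using VW[OF b(1)] .
      have cW: "c \<in> W" unfolding c_def using subspace_diff[OF Ws subspace_diff[OF Ws u aW] bW] .
      have "T\<^sub>1 c = T\<^sub>1 (u - a) - T\<^sub>1 b" unfolding c_def using T1diff subspace_diff[OF Ws u aW] bW by blast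
      also have "... = 0" using T1diff[OF u aW] F1[OF a(1)] a(4) b(2) by simp
      finally have "T\<^sub>1 c = 0" .
      moreover have "u = a + b + c" unfolding c_def by simp
      ultimately show "u \<in> {a + b + c |a b c. a \<in> W\<^sub>0 \<and> b \<in> {v \<in> V. T\<^sub>1 v \<in> {w \<in> adj_dom ip W\<^sub>0 T\<^sub>0. T\<^sub>1' w = 0}}
              \<and> c \<in> {w \<in> W. T\<^sub>1 w = 0}}"
        using a b cW by blast
    next
      fix u assume "u \<in> {a + b + c |a b c. a \<in> W\<^sub>0 \<and> b \<in> {v \<in> V. T\<^sub>1 v \<in> {w \<in> adj_dom ip W\<^sub>0 T\<^sub>0. T\<^sub>1' w = 0}}
              \<and> c \<in> {w \<in> W. T\<^sub>1 w = 0}}"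
      then obtain a b c where abc: "u = a + b + c" "a \<in> W\<^sub>0" "b \<in> V" "c \<in> W" by blast
      then show "u \<in> W" using F1 VW subspace_add[OF Ws] by metis
    qed
  next
    show "\<forall>a\<in>W\<^sub>0. \<forall>b\<in>{v \<in> V. T\<^sub>1 v \<in> {w \<in> adj_dom ip W\<^sub>0 T\<^sub>0. T\<^sub>1' w = 0}}. \<forall>c\<in>{w \<in> W. T\<^sub>1 w = 0}.
            a + b + c = 0 \<longrightarrow> a = 0 \<and> b = 0 \<and> c = 0"
    proof (intro ballI impI)
      fix a b c assume a: "a \<in> W\<^sub>0" and b: "b \<in> {v \<in> V. T\<^sub>1 v \<in> {w \<in> adj_dom ip W\<^sub>0 T\<^sub>0. T\<^sub>1' w = 0}}"
        and c: "c \<in> {w \<in> W. T\<^sub>1 w = 0}" and s: "a + b + c = 0"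
      have aW: "a \<in> W" using F1[OF a] by simp
      have bW: "b \<in> W" using b VW by blast
      have kW: "T\<^sub>1 b \<in> W" using b WW' W'_def by blast
      have "T\<^sub>1 (a + b + c) = T\<^sub>1 a + T\<^sub>1 b + T\<^sub>1 c"
        using T1add aW bW c subspace_add[OF Ws aW bW] by simp
      then have "T\<^sub>0 a + T\<^sub>1 b = 0" using s T1zero c F1[OF a] by simp
      then have e: "T\<^sub>0 a = - T\<^sub>1 b" by (simp add: eq_neg_iff_add_eq_0)
      have "ip (T\<^sub>0 a) (T\<^sub>1 b) = 0" using orth1[OF a kW] b by simp
      then have "ip (T\<^sub>0 a) (T\<^sub>0 a) = 0" using e by (simp add: ip_neg_right)
      then have "T\<^sub>0 a = 0" by (rule ip_zeroD)
      then have a0: "a = 0" using zero_of[OF a _ co0] by simp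
      then have "T\<^sub>1 b = T\<^sub>1 0" using e T1zero \<open>T\<^sub>0 a = 0\<close> by simp
      then have b0: "b = 0" using inj b subspace_zero[OF V(3)] by (simp add: inj_on_eq_iff)
      then show "a = 0 \<and> b = 0 \<and> c = 0" using a0 s by simp
    qed
  qed
  have part2: "direct_sum3 W W\<^sub>0 {u \<in> adj_dom ip V T\<^sub>1. adj_fun ip V T\<^sub>1 u \<in> {w \<in> W. T\<^sub>1 w = 0}}
                          {w \<in> adj_dom ip W\<^sub>0 T\<^sub>0. T\<^sub>1' w = 0}"
    unfolding direct_sum3_def Ds_def[symmetric] R_def[symmetric] W'_def[symmetric] WW'[symmetric]
  proof (intro conjI)
    show "W = {a + b + c |a b c. a \<in> W\<^sub>0 \<and> b \<in> {u \<in> Ds. R u \<in> {w \<in> W. T\<^sub>1 w = 0}} \<and> c \<in> {w \<in> W. T\<^sub>1' w = 0}}"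
    proof (intro equalityI subsetI)
      fix u assume u: "u \<in> W"
      obtain a k where a: "a \<in> W\<^sub>0" "k \<in> W" "T\<^sub>1 k = 0" "T\<^sub>1' u = T\<^sub>0' a + k"
        using range_decomp[OF lo0' clT0' mu(1) co0' dn, of "T\<^sub>1' u"] unfolding T1_def W_def by blast
      obtain b where b: "b \<in> Ds" "R b = k" using surjR by blast
      define c where "c = u - a - b"
      have aW: "a \<in> W" using F1[OF a(1)] by simp
      have bW: "b \<in> W" using DsW[OF b(1)] by simp
      have cW: "c \<in> W" unfolding c_def using subspace_diff[OF Ws subspace_diff[OF Ws u aW] bW] .
      have "T\<^sub>1' c = T\<^sub>1' (u - a) - T\<^sub>1' b" unfolding c_def using T1'diff subspace_diff[OF Ws u aW] bW by blast
      also have "... = 0" using T1'diff[OF u aW] F1'[OF a(1)] a(4) b(2) DsW[OF b(1)] by simp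
      finally have "T\<^sub>1' c = 0" .
      moreover have "u = a + b + c" unfolding c_def by simp
      ultimately show "u \<in> {a + b + c |a b c. a \<in> W\<^sub>0 \<and> b \<in> {u \<in> Ds. R u \<in> {w \<in> W. T\<^sub>1 w = 0}} \<and> c \<in> {w \<in> W. T\<^sub>1' w = 0}}"
        using a b cW by blast
    next
      fix u assume "u \<in> {a + b + c |a b c. a \<in> W\<^sub>0 \<and> b \<in> {u \<in> Ds. R u \<in> {w \<in> W. T\<^sub>1 w = 0}} \<and> c \<in> {w \<in> W. T\<^sub>1' w = 0}}"
      then obtain a b c where abc: "u = a + b + c" "a \<in> W\<^sub>0" "b \<in> Ds" "c \<in> W" by blast
      then show "u \<in> W" using F1 DsW subspace_add[OF Ws] by metis
    qed
  next
    show "\<forall>a\<in>W\<^sub>0. \<forall>b\<in>{u \<in> Ds. R u \<in> {w \<in> W. T\<^sub>1 w = 0}}. \<forall>c\<in>{w \<in> W. T\<^sub>1' w = 0}.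
            a + b + c = 0 \<longrightarrow> a = 0 \<and> b = 0 \<and> c = 0"
    proof (intro ballI impI)
      fix a b c assume a: "a \<in> W\<^sub>0" and b: "b \<in> {u \<in> Ds. R u \<in> {w \<in> W. T\<^sub>1 w = 0}}"
        and c: "c \<in> {w \<in> W. T\<^sub>1' w = 0}" and s: "a + b + c = 0"
      have aW: "a \<in> W" using F1[OF a] by simp
      have bW: "b \<in> W" and Tb: "T\<^sub>1' b = R b" using b DsW by auto
      have kW: "R b \<in> W" "T\<^sub>1 (R b) = 0" using b by auto
      have "T\<^sub>1' (a + b + c) = T\<^sub>1' a + T\<^sub>1' b + T\<^sub>1' c"
        using T1'add aW bW c subspace_add[OF Ws aW bW] by simp
      then have "T\<^sub>0' a + R b = 0" using s T1'zero c F1'[OF a] Tb by simp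
      then have e: "T\<^sub>0' a = - R b" by (simp add: eq_neg_iff_add_eq_0)
      have "ip (T\<^sub>0' a) (R b) = 0" using orth2[OF a kW] .
      then have "ip (T\<^sub>0' a) (T\<^sub>0' a) = 0" using e by (simp add: ip_neg_right)
      then have "T\<^sub>0' a = 0" by (rule ip_zeroD)
      then have a0: "a = 0" using zero_of[OF a _ co0'] by simp
      then have "R b = 0" using e \<open>T\<^sub>0' a = 0\<close> by simp
      then have b0: "b = 0" using Rinj b by blast
      then show "a = 0 \<and> b = 0 \<and> c = 0" using a0 s by simp
    qed
  qed
  show ?thesis using part1 part2 by blast
qed

end
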